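(* Let $\mathbb{L}\subseteq\mathbb{R}^d\times\mathbb{R}$ be any closed convex cone, assume Boundedness, and let $A_0,\dots,A_T\in\mathcal{A}$. Let $(y_t,b_t)$ be generated by the projected strategic perceptron with cone $\mathbb{L}$ and stepsize $\gamma=1$, and $\mathcal{M}_T=\{t\in\{0,\dots,T\}:\hat\ell(r(A_t,y_t,b_t),y_t,b_t)\ne\ell(A_t)\}$. Then for every $(y,b)\in\mathbb{L}\setminus\{0\}$, $$|\mathcal{M}_T|-\sum_{t\in\mathcal{M}_T}L_{\mathrm{hinge}}\big((y,b);(s(A_t,y_t,b_t),1),\ell(A_t)\big)\le\sqrt{\|y\|_2^2+b^2}\,\sqrt{\widetilde D^2+1}\,\sqrt{|\mathcal{M}_T|}.$$
   Context: Setting: $\mathcal{A}\subseteq\mathbb{R}^d$, labels $\ell(A)\in\{\pm1\}$; $\operatorname{sign}(0)=+1$; norm $\|\cdot\|$ with dual $\|y\|_*=\max_{\|w\|\le1}y^\top w$; constant $c>0$; a fixed selection $v$ with $v(0)=0$ and $v(y)\in\arg\max_{\|w\|\le1}y^\top w$ for $y\ne0$, with $v(\lambda y)=v(y)$ for $\lambda>0$. Predicted label $\hat\ell(x,y,b)=\operatorname{sign}(y^\top x+b-2\|y\|_*/c)$. Response: for $y\ne0$, $r(A,y,b)=A+(\tfrac2c-\tfrac{y^\top A+b}{\|y\|_*})v(y)$ if $0\le\tfrac{y^\top A+b}{\|y\|_*}<\tfrac2c$, else $A$. Proxy: for $y\ne0$, $s(A,y,b)=A-\tfrac{y^\top A+b}{\|y\|_*}v(y)$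 if $0\le\tfrac{y^\top A+b}{\|y\|_*}<\tfrac2c$ and $\ell(A)=-1$; $=A+(\tfrac2c-\tfrac{y^\top A+b}{\|y\|_*})v(y)$ if the range condition holds and $\ell(A)=+1$; $=A$ otherwise; $r(A,0,b)=s(A,0,b)=A$. Boundedness: $D:=\sup_{A\in\mathcal{A}}\|A\|_2<\infty$; $C_{\|\cdot\|}=\max_y\|v(y)\|_2$; $\widetilde D=D+\tfrac2cC_{\|\cdot\|}$. Hinge loss: $L_{\mathrm{hinge}}(q;\xi,\ell)=\max\{0,1-\ell\,q^\top\xi\}$ for $q,\xi\in\mathbb{R}^{d+1}$. Projected strategic perceptron with closed convex cone $\mathbb{L}$ and stepsize $\gamma>0$: $q_0=(y_0,b_0)=(0,0)$; for $t=0,1,\dots,T$: agent $A_t$ is shown $(y_t,b_t)$, responds $r(A_t,y_t,b_t)$, is predicted $\hat\ell(r(A_t,y_t,b_t),y_t,b_t)$; with $\xi_t=(s(A_t,y_t,b_t),1)$, set $z_{t+1}=q_t+\gamma\ell(A_t)\xi_t$ if the prediction differs from $\ell(A_t)$, else $z_{t+1}=q_t$; $q_{t+1}=(y_{t+1},b_{t+1})=\Pi_{\mathbb{L}}(z_{t+1})$ (Euclidean projection). *)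

theory Defs
  imports "HOL-Analysis.Analysis"
begin

text \<open>Setting: agents live in a Euclidean space 'a (= R^d); nrm is an arbitrary norm,
  c > 0, v is the fixed dual-norm selection, lab is the labelling function.\<close>

definition is_norm :: "('a::real_vector \<Rightarrow> real) \<Rightarrow> bool" where
  "is_norm nrm \<longleftrightarrow> (\<forall>x. 0 \<le> nrm x) \<and> (\<forall>x. nrm x = 0 \<longleftrightarrow> x = 0)
     \<and> (\<forall>x y. nrm (x + y) \<le> nrm x + nrm y) \<and> (\<forall>a x. nrm (a *\<^sub>R x) = \<bar>a\<bar> * nrm x)"

definition dual_norm :: "('a::real_inner \<Rightarrow> real) \<Rightarrow> 'a \<Rightarrow> real" where
  "dual_norm nrm y = Sup {y \<bullet> w | w. nrm w \<le> 1}"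

definition sgnp :: "real \<Rightarrow> real" where
  "sgnp x = (if x \<ge> 0 then 1 else -1)"

definition pred_label :: "('a::real_inner \<Rightarrow> real) \<Rightarrow> real \<Rightarrow> 'a \<Rightarrow> 'a \<Rightarrow> real \<Rightarrow> real" where
  "pred_label nrm c x y b = sgnp (y \<bullet> x + b - 2 * dual_norm nrm y / c)"

definition resp :: "('a::real_inner \<Rightarrow> real) \<Rightarrow> real \<Rightarrow> ('a \<Rightarrow> 'a) \<Rightarrow> 'a \<Rightarrow> 'a \<Rightarrow> real \<Rightarrow> 'a" where
  "resp nrm c v A y b =
     (if y = 0 then A
      else (let m = (y \<bullet> A + b) / dual_norm nrm y in
            if 0 \<le> m \<and> m < 2 / c then A + (2 / c - m) *\<^sub>R v y else A))"

definition proxy :: "('a::real_inner \<Rightarrow> real) \<Rightarrow> real \<Rightarrow> ('a \<Rightarrow> 'a) \<Rightarrow> ('a \<Rightarrow> real)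
                      \<Rightarrow> 'a \<Rightarrow> 'a \<Rightarrow> real \<Rightarrow> 'a" where
  "proxy nrm c v lab A y b =
     (if y = 0 then A
      else (let m = (y \<bullet> A + b) / dual_norm nrm y in
            if 0 \<le> m \<and> m < 2 / c \<and> lab A = -1 then A - m *\<^sub>R v y
            else if 0 \<le> m \<and> m < 2 / c \<and> lab A = 1 then A + (2 / c - m) *\<^sub>R v y
            else A))"

definition hinge :: "('a::real_inner) \<Rightarrow> 'a \<Rightarrow> real \<Rightarrow> real" where
  "hinge q \<xi> l = max 0 (1 - l * (q \<bullet> \<xi>))"

primrec spp :: "('a::euclidean_space \<Rightarrow> real) \<Rightarrow> real \<Rightarrow> ('a \<Rightarrow> 'a) \<Rightarrow> ('a \<Rightarrow> real)
                 \<Rightarrow> ('a \<times> real) set \<Rightarrow> real \<Rightarrow> (nat \<Rightarrow> 'a) \<Rightarrow> nat \<Rightarrow> 'a \<times> real" where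
  "spp nrm c v lab L \<gamma> As 0 = (0, 0)"
| "spp nrm c v lab L \<gamma> As (Suc t) =
     (let q = spp nrm c v lab L \<gamma> As t; y = fst q; b = snd q; A = As t;
          z = (if pred_label nrm c (resp nrm c v A y b) y b \<noteq> lab A
               then q + \<gamma> *\<^sub>R (lab A *\<^sub>R (proxy nrm c v lab A y b, 1))
               else q)
      in closest_point L z)"

definition mistakes :: "('a::euclidean_space \<Rightarrow> real) \<Rightarrow> real \<Rightarrow> ('a \<Rightarrow> 'a) \<Rightarrow> ('a \<Rightarrow> real)
                 \<Rightarrow> ('a \<times> real) set \<Rightarrow> real \<Rightarrow> (nat \<Rightarrow> 'a) \<Rightarrow> nat \<Rightarrow> nat set" where
  "mistakes nrm c v lab L \<gamma> As T =
     {t \<in> {0..T}. pred_label nrm c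
         (resp nrm c v (As t) (fst (spp nrm c v lab L \<gamma> As t)) (snd (spp nrm c v lab L \<gamma> As t)))
         (fst (spp nrm c v lab L \<gamma> As t)) (snd (spp nrm c v lab L \<gamma> As t)) \<noteq> lab (As t)}"

definition bnd_D :: "'a::euclidean_space set \<Rightarrow> real" where
  "bnd_D \<A> = Sup (norm ` \<A>)"

definition C_norm :: "('a::euclidean_space \<Rightarrow> 'a) \<Rightarrow> real" where
  "C_norm v = Sup (range (\<lambda>y. norm (v y)))"

definition D_tilde :: "'a::euclidean_space set \<Rightarrow> real \<Rightarrow> ('a \<Rightarrow> 'a) \<Rightarrow> real" where
  "D_tilde \<A> c v = bnd_D \<A> + 2 / c * C_norm v"

end

theory Submission
  imports Defs
begin

lemma nrm_basic:
  assumes "is_norm nrm"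
  shows "nrm 0 = 0" "\<And>x. 0 \<le> nrm x" "\<And>x y. nrm (x + y) \<le> nrm x + nrm y"
    "\<And>a x. nrm (a *\<^sub>R x) = \<bar>a\<bar> * nrm x" "\<And>x. nrm x = 0 \<longleftrightarrow> x = 0"
  using assms unfolding is_norm_def by auto

lemma nrm_minus:
  assumes "is_norm nrm" shows "nrm (x - y) = nrm (y - x)"
proof -
  have "nrm (x - y) = nrm ((-1) *\<^sub>R (y - x))" by simp
  also have "\<dots> = nrm (y - x)" using nrm_basic(4)[OF assms, of "-1" "y - x"] by simp
  finally show ?thesis .
qed

lemma nrm_sum:
  assumes "is_norm nrm" "finite S"
  shows "nrm (sum f S) \<le> (\<Sum>i\<in>S. nrm (f i))"
  using assms(2)
proof (induction S rule: finite_induct)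
  case empty then show ?case using nrm_basic(1)[OF assms(1)] by simp
next
  case (insert x F)
  then show ?case using nrm_basic(3)[OF assms(1), of "f x" "sum f F"] by simp
qed

lemma nrm_upper:
  fixes nrm :: "'a::euclidean_space \<Rightarrow> real"
  assumes "is_norm nrm"
  shows "nrm x \<le> (\<Sum>i\<in>Basis. nrm i) * norm x"
proof -
  have "nrm x = nrm (\<Sum>i\<in>Basis. (x \<bullet> i) *\<^sub>R i)" by (simp add: euclidean_representation)
  also have "\<dots> \<le> (\<Sum>i\<in>Basis. nrm ((x \<bullet> i) *\<^sub>R i))" by (rule nrm_sum[OF assms]) simp
  also have "\<dots> = (\<Sum>i\<in>Basis. \<bar>x \<bullet> i\<bar> * nrm i)" using nrm_basic(4)[OF assms] by simp
  also have "\<dots> \<le> (\<Sum>i\<in>Basis. norm x * nrm i)"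
    by (rule sum_mono, rule mult_right_mono) (auto simp: Basis_le_norm nrm_basic(2)[OF assms])
  also have "\<dots> = (\<Sum>i\<in>Basis. nrm i) * norm x" by (simp add: sum_distrib_left mult.commute)
  finally show ?thesis .
qed

lemma nrm_cont:
  fixes nrm :: "'a::euclidean_space \<Rightarrow> real"
  assumes "is_norm nrm"
  shows "continuous_on S nrm"
proof -
  define K where "K = (\<Sum>i\<in>Basis. nrm (i::'a))"
  have K0: "K \<ge> 0" unfolding K_def using nrm_basic(2)[OF assms] by (simp add: sum_nonneg)
  have "lipschitz_on K S nrm"
  proof (rule lipschitz_onI)
    fix x y assume "x \<in> S" "y \<in> S"
    have a: "nrm x \<le> nrm (x - y) + nrm y" using nrm_basic(3)[OF assms, of "x - y" y] by simp
    have b: "nrm y \<le> nrm (x - y) + nrm x" using nrm_basic(3)[OF assms, of "y - x" x] nrm_minus[OF assms, of x y] by simp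
    have "nrm (x - y) \<le> K * norm (x - y)" unfolding K_def by (rule nrm_upper[OF assms])
    then show "dist (nrm x) (nrm y) \<le> K * dist x y" using a b by (simp add: dist_norm abs_le_iff)
  qed (rule K0)
  then show ?thesis by (rule lipschitz_on_continuous_on)
qed

lemma nrm_lower:
  fixes nrm :: "'a::euclidean_space \<Rightarrow> real"
  assumes "is_norm nrm"
  shows "\<exists>m>0. \<forall>x. m * norm x \<le> nrm x"
proof -
  have "sphere (0::'a) 1 \<noteq> {}" by simp
  then obtain x0 where x0: "x0 \<in> sphere (0::'a) 1" "\<forall>y\<in>sphere 0 1. nrm x0 \<le> nrm y"
    using continuous_attains_inf[OF compact_sphere _ nrm_cont[OF assms]] by blast
  have "x0 \<noteq> 0" using x0 by auto
  then have m: "nrm x0 > 0" using nrm_basic(2,5)[OF assms] by (metis less_eq_real_def)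
  have "nrm x0 * norm x \<le> nrm x" for x
  proof (cases "x = 0")
    case True then show ?thesis using nrm_basic(1)[OF assms] by simp
  next
    case False
    then have "(1 / norm x) *\<^sub>R x \<in> sphere 0 1" by simp
    then have "nrm x0 \<le> nrm ((1 / norm x) *\<^sub>R x)" using x0 by blast
    also have "\<dots> = nrm x / norm x" using nrm_basic(4)[OF assms] by simp
    finally show ?thesis using False by (simp add: field_simps)
  qed
  then show ?thesis using m by blast
qed


lemma dual_norm_0:
  assumes "is_norm nrm" shows "dual_norm nrm 0 = 0"
proof -
  have "{(0::'a) \<bullet> w | w. nrm w \<le> 1} = {0}" using nrm_basic(1)[OF assms]
    by (auto intro!: exI[of _ 0])
  then show ?thesis unfolding dual_norm_def by simp
qed

lemma dual_norm_v:
  fixes nrm :: "'a::euclidean_space \<Rightarrow> real"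
  assumes nrm: "is_norm nrm" and y: "y \<noteq> 0"
    and v: "nrm (v y) \<le> 1 \<and> (\<forall>w. nrm w \<le> 1 \<longrightarrow> y \<bullet> w \<le> y \<bullet> v y)"
  shows "dual_norm nrm y = y \<bullet> v y" "y \<bullet> v y > 0"
proof -
  show "dual_norm nrm y = y \<bullet> v y" unfolding dual_norm_def
    by (rule cSup_eq_maximum) (use v in auto)
  have ny: "nrm y > 0" using nrm_basic(2,5)[OF nrm, of y] y by linarith
  define w where "w = (1 / nrm y) *\<^sub>R y"
  have "nrm w = 1" unfolding w_def using nrm_basic(4)[OF nrm] ny by simp
  then have "y \<bullet> w \<le> y \<bullet> v y" using v by simp
  moreover have "y \<bullet> w = (y \<bullet> y) / nrm y" unfolding w_def by simp
  moreover have "y \<bullet> y > 0" using y by simp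
  ultimately show "y \<bullet> v y > 0" using ny
    by (smt (verit) divide_pos_pos)
qed

lemma key_mistake:
  fixes nrm :: "'a::euclidean_space \<Rightarrow> real"
  assumes nrm: "is_norm nrm" and c: "c > 0"
    and v_argmax: "\<And>y. y \<noteq> 0 \<Longrightarrow> nrm (v y) \<le> 1 \<and> (\<forall>w. nrm w \<le> 1 \<longrightarrow> y \<bullet> w \<le> y \<bullet> v y)"
    and lab: "lab A \<in> {-1, 1}"
    and mis: "pred_label nrm c (resp nrm c v A y b) y b \<noteq> lab A"
  shows "lab A * ((y, b) \<bullet> (proxy nrm c v lab A y b, 1)) \<le> 0"
proof (cases "y = 0")
  case True
  then show ?thesis using mis lab dual_norm_0[OF nrm]
    by (auto simp: pred_label_def resp_def proxy_def sgnp_def split: if_splits)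
next
  case False
  define d where "d = y \<bullet> v y"
  have dn: "dual_norm nrm y = d" and d0: "d > 0"
    using dual_norm_v[of nrm y v, OF nrm False v_argmax[OF False]] d_def by auto
  define m where "m = (y \<bullet> A + b) / d"
  have ym: "y \<bullet> A + b = m * d" unfolding m_def using d0 by simp
  show ?thesis
  proof (cases "0 \<le> m \<and> m < 2 / c")
    case True
    have r: "resp nrm c v A y b = A + (2 / c - m) *\<^sub>R v y"
      unfolding resp_def using False True by (simp add: dn m_def Let_def)
    have "y \<bullet> (A + (2 / c - m) *\<^sub>R v y) + b = 2 * d / c"
      using ym by (simp add: inner_add_right d_def[symmetric] algebra_simps)
    then have "pred_label nrm c (resp nrm c v A y b) y b = 1"
      unfolding pred_label_def r dn sgnp_def by simp
    then have la: "lab A = -1" using mis lab by auto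
    have p: "proxy nrm c v lab A y b = A - m *\<^sub>R v y"
      unfolding proxy_def using False True la by (simp add: dn m_def Let_def)
    have "(y, b) \<bullet> (proxy nrm c v lab A y b, 1) = 0"
      unfolding p using ym by (simp add: inner_diff_right d_def[symmetric] algebra_simps)
    then show ?thesis by simp
  next
    case nr: False
    have r: "resp nrm c v A y b = A"
      unfolding resp_def using False nr by (auto simp: dn m_def Let_def)
    have p: "proxy nrm c v lab A y b = A"
      unfolding proxy_def using False nr by (auto simp: dn m_def Let_def)
    have ip: "(y, b) \<bullet> (proxy nrm c v lab A y b, 1) = m * d" unfolding p using ym by simp
    show ?thesis
    proof (cases "m < 0")
      case True
      have "m * d < 0" using True d0 by (simp add: mult_neg_pos)
      moreover have "2 * d / c > 0" using d0 c by simp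
      ultimately have "pred_label nrm c (resp nrm c v A y b) y b = -1"
        unfolding pred_label_def r dn sgnp_def using ym by simp
      then have "lab A = 1" using mis lab by auto
      then show ?thesis using ip \<open>m * d < 0\<close> by simp
    next
      case False
      then have m2: "m \<ge> 2 / c" using nr by auto
      have "2 / c * d \<le> m * d" by (rule mult_right_mono[OF m2]) (use d0 in simp)
      moreover have "2 * d / c = 2 / c * d" by simp
      ultimately have "m * d \<ge> 2 * d / c" by linarith
      then have "pred_label nrm c (resp nrm c v A y b) y b = 1"
        unfolding pred_label_def r dn sgnp_def using ym by simp
      then have "lab A = -1" using mis lab by auto
      moreover have "m * d \<ge> 0" using False d0 by simp
      ultimately show ?thesis using ip by simp
    qed
  qed
qed

lemma proxy_bound:
  fixes nrm :: "'a::euclidean_space \<Rightarrow> real"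
  assumes c: "c > 0" and A: "norm A \<le> D" and vb: "norm (v y) \<le> C"
  shows "norm (proxy nrm c v lab A y b) \<le> D + 2 / c * C"
proof -
  have C0: "C \<ge> 0" using vb norm_ge_zero order_trans by blast
  define m where "m = (y \<bullet> A + b) / dual_norm nrm y"
  have base: "norm A \<le> D + 2 / c * C" using A C0 c by (smt (verit) divide_nonneg_pos mult_nonneg_nonneg)
  show ?thesis
  proof (cases "y \<noteq> 0 \<and> 0 \<le> m \<and> m < 2 / c")
    case True
    have 1: "norm (A - m *\<^sub>R v y) \<le> D + 2 / c * C"
    proof -
      have "norm (A - m *\<^sub>R v y) \<le> norm A + \<bar>m\<bar> * norm (v y)" by (metis norm_triangle_ineq4 norm_scaleR)
      also have "\<bar>m\<bar> * norm (v y) \<le> 2 / c * C"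
        using True vb c by (intro mult_mono) auto
      finally show ?thesis using A by linarith
    qed
    have 2: "norm (A + (2 / c - m) *\<^sub>R v y) \<le> D + 2 / c * C"
    proof -
      have "norm (A + (2 / c - m) *\<^sub>R v y) \<le> norm A + \<bar>2 / c - m\<bar> * norm (v y)" by (metis norm_triangle_ineq norm_scaleR)
      also have "\<bar>2 / c - m\<bar> * norm (v y) \<le> 2 / c * C"
        using True vb c by (intro mult_mono) auto
      finally show ?thesis using A by linarith
    qed
    show ?thesis unfolding proxy_def using True 1 2 base by (auto simp: m_def Let_def)
  next
    case False
    then show ?thesis unfolding proxy_def using base by (auto simp: m_def Let_def)
  qed
qed

lemma proj_props:
  fixes L :: "('b::euclidean_space) set"
  assumes L: "closed L" "convex L" "cone L" and u: "u \<in> L"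
  shows "u \<bullet> z \<le> u \<bullet> closest_point L z" "norm (closest_point L z) \<le> norm z"
proof -
  have ne: "L \<noteq> {}" using u by auto
  have z0: "0 \<in> L" using L(3) u unfolding cone_def by (metis order_refl scaleR_zero_left)
  define p where "p = closest_point L z"
  have pL: "p \<in> L" unfolding p_def by (rule closest_point_in_set[OF L(1) ne])
  have "(1/2) *\<^sub>R p + (1/2) *\<^sub>R u \<in> L"
    using convexD[OF L(2) pL u, of "1/2" "1/2"] by simp
  then have "2 *\<^sub>R ((1/2) *\<^sub>R p + (1/2) *\<^sub>R u) \<in> L" using L(3) unfolding cone_def by auto
  then have "p + u \<in> L" by (simp add: scaleR_add_right)
  then have "(z - p) \<bullet> ((p + u) - p) \<le> 0" unfolding p_def by (rule closest_point_dot[OF L(2,1)])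
  then show "u \<bullet> z \<le> u \<bullet> closest_point L z" unfolding p_def[symmetric]
    by (simp add: inner_diff_right inner_commute)
  have "dist (closest_point L z) (closest_point L 0) \<le> dist z 0"
    by (rule closest_point_lipschitz[OF L(2,1) ne])
  then show "norm (closest_point L z) \<le> norm z" using closest_point_self[OF z0] by simp
qed


theorem mainTheorem15:
  fixes \<A> :: "'a::euclidean_space set"
    and nrm :: "'a \<Rightarrow> real" and c :: real and v :: "'a \<Rightarrow> 'a" and lab :: "'a \<Rightarrow> real"
    and L :: "('a \<times> real) set" and As :: "nat \<Rightarrow> 'a" and T :: nat
  assumes nrm: "is_norm nrm"
    and c: "c > 0"
    and v0: "v 0 = 0"
    and v_argmax: "\<And>y. y \<noteq> 0 \<Longrightarrow> nrm (v y) \<le> 1 \<and> (\<forall>w. nrm w \<le> 1 \<longrightarrow> y \<bullet> w \<le> y \<bullet> v y)"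
    and v_scale: "\<And>y k. k > 0 \<Longrightarrow> v (k *\<^sub>R y) = v y"
    and lab: "\<And>A. A \<in> \<A> \<Longrightarrow> lab A \<in> {-1, 1}"
    and bounded: "bounded \<A>"
    and L: "closed L" "convex L" "cone L"
    and As: "\<And>t. t \<le> T \<Longrightarrow> As t \<in> \<A>"
  shows "\<forall>(y, b) \<in> L - {0}.
           (let M = mistakes nrm c v lab L 1 As T in
              real (card M)
              - (\<Sum>t\<in>M. hinge (y, b)
                   (proxy nrm c v lab (As t) (fst (spp nrm c v lab L 1 As t)) (snd (spp nrm c v lab L 1 As t)), 1)
                   (lab (As t)))
              \<le> sqrt ((norm y)\<^sup>2 + b\<^sup>2) * sqrt ((D_tilde \<A> c v)\<^sup>2 + 1) * sqrt (real (card M)))"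
proof -
  have main: "let M = mistakes nrm c v lab L 1 As T in
              real (card M)
              - (\<Sum>t\<in>M. hinge (y, b)
                   (proxy nrm c v lab (As t) (fst (spp nrm c v lab L 1 As t)) (snd (spp nrm c v lab L 1 As t)), 1)
                   (lab (As t)))
              \<le> sqrt ((norm y)\<^sup>2 + b\<^sup>2) * sqrt ((D_tilde \<A> c v)\<^sup>2 + 1) * sqrt (real (card M))"
    if yb: "(y, b) \<in> L" "(y, b) \<noteq> 0" for y b
  proof -
  define u where "u = (y, b)"
  have uL: "u \<in> L" using yb u_def by simp
  define q where "q = spp nrm c v lab L 1 As"
  define mis where "mis t \<longleftrightarrow> pred_label nrm c (resp nrm c v (As t) (fst (q t)) (snd (q t))) (fst (q t)) (snd (q t)) \<noteq> lab (As t)" for t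
  define \<xi> where "\<xi> t = (proxy nrm c v lab (As t) (fst (q t)) (snd (q t)), 1::real)" for t
  define ell where "ell t = lab (As t)" for t
  define D where "D = D_tilde \<A> c v"
  define K where "K = D\<^sup>2 + 1"
  define Mn where "Mn n = {t\<in>{0..<n}. mis t}" for n
  have step: "q (Suc t) = closest_point L (if mis t then q t + ell t *\<^sub>R \<xi> t else q t)" for t
    by (simp add: q_def mis_def \<xi>_def ell_def Let_def)
  obtain m where m: "m > 0" "\<And>x. m * norm x \<le> nrm x" using nrm_lower[OF nrm] by blast
  have vb: "norm (v z) \<le> 1 / m" for z
  proof (cases "z = 0")
    case True then show ?thesis using v0 m by simp
  next
    case False
    then have "m * norm (v z) \<le> 1" using m(2)[of "v z"] v_argmax[OF False] by linarith
    then show ?thesis using m(1) by (simp add: field_simps)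
  qed
  have bddv: "bdd_above (range (\<lambda>z. norm (v z)))" using vb by (intro bdd_aboveI[of _ "1 / m"]) auto
  have vC: "norm (v z) \<le> C_norm v" for z unfolding C_norm_def by (rule cSUP_upper[OF _ bddv]) simp
  have bddA: "bdd_above (norm ` \<A>)" using bounded by (simp add: bounded_imp_bdd_above bounded_norm_comp)
  have AD: "norm (As t) \<le> bnd_D \<A>" if "t \<le> T" for t
    unfolding bnd_D_def by (rule cSUP_upper[OF As[OF that] bddA])
  have xib: "(norm (\<xi> t))\<^sup>2 \<le> K" if "t \<le> T" for t
  proof -
    have "norm (fst (\<xi> t)) \<le> D" unfolding \<xi>_def D_def D_tilde_def
      using proxy_bound[of c "As t" "bnd_D \<A>" v "fst (q t)" "C_norm v" nrm lab "snd (q t)", OF c AD[OF that] vC] by simp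
    moreover have "0 \<le> norm (fst (\<xi> t))" by simp
    ultimately have "(norm (fst (\<xi> t)))\<^sup>2 \<le> D\<^sup>2" by (simp add: power_mono)
    then show ?thesis unfolding K_def \<xi>_def by (simp add: norm_Pair)
  qed
  have labt: "ell t \<in> {-1, 1}" if "t \<le> T" for t unfolding ell_def using lab As that by blast
  have keyt: "ell t * (q t \<bullet> \<xi> t) \<le> 0" if "t \<le> T" "mis t" for t
  proof -
    have "lab (As t) * ((fst (q t), snd (q t)) \<bullet> (proxy nrm c v lab (As t) (fst (q t)) (snd (q t)), 1)) \<le> 0"
      by (rule key_mistake[of nrm c v lab "As t" "fst (q t)" "snd (q t)", OF nrm c v_argmax labt[OF that(1), unfolded ell_def]])
         (use that(2) in \<open>unfold mis_def\<close>)
    then show ?thesis unfolding ell_def \<xi>_def by simp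
  qed
  have inv: "(\<Sum>t\<in>Mn n. 1 - hinge u (\<xi> t) (ell t)) \<le> u \<bullet> q n \<and> (norm (q n))\<^sup>2 \<le> real (card (Mn n)) * K"
    if "n \<le> Suc T" for n
    using that
  proof (induction n)
    case 0
    then show ?case by (simp add: Mn_def q_def zero_prod_def[symmetric])
  next
    case (Suc n)
    then have nT: "n \<le> T" and IH: "(\<Sum>t\<in>Mn n. 1 - hinge u (\<xi> t) (ell t)) \<le> u \<bullet> q n"
      "(norm (q n))\<^sup>2 \<le> real (card (Mn n)) * K" by auto
    have fin: "finite (Mn n)" unfolding Mn_def by simp
    show ?case
    proof (cases "mis n")
      case True
      have MS: "Mn (Suc n) = insert n (Mn n)" "n \<notin> Mn n" unfolding Mn_def using True by auto
      define z where "z = q n + ell n *\<^sub>R \<xi> n"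
      have qS: "q (Suc n) = closest_point L z" using step True z_def by simp
      have l2: "ell n * ell n = 1" using labt[OF nT] by auto
      have h: "1 - hinge u (\<xi> n) (ell n) \<le> ell n * (u \<bullet> \<xi> n)" unfolding hinge_def by simp
      have "(\<Sum>t\<in>Mn (Suc n). 1 - hinge u (\<xi> t) (ell t)) = (1 - hinge u (\<xi> n) (ell n)) + (\<Sum>t\<in>Mn n. 1 - hinge u (\<xi> t) (ell t))"
        using MS fin by simp
      also have "\<dots> \<le> u \<bullet> z" using h IH(1) unfolding z_def by (simp add: inner_add_right)
      also have "\<dots> \<le> u \<bullet> q (Suc n)" unfolding qS by (rule proj_props(1)[OF L uL])
      finally have A1: "(\<Sum>t\<in>Mn (Suc n). 1 - hinge u (\<xi> t) (ell t)) \<le> u \<bullet> q (Suc n)" .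
      have "(norm (q (Suc n)))\<^sup>2 \<le> (norm z)\<^sup>2"
        unfolding qS using proj_props(2)[OF L uL, of z] by (simp add: power_mono)
      also have "(norm z)\<^sup>2 = (norm (q n))\<^sup>2 + 2 * (ell n * (q n \<bullet> \<xi> n)) + (ell n * ell n) * (norm (\<xi> n))\<^sup>2"
        unfolding z_def power2_norm_eq_inner by (simp add: inner_add_left inner_add_right inner_commute algebra_simps)
      also have "\<dots> \<le> real (card (Mn n)) * K + K"
        using IH(2) keyt[OF nT True] xib[OF nT] l2 by simp
      also have "\<dots> = real (card (Mn (Suc n))) * K" using MS fin by (simp add: algebra_simps)
      finally show ?thesis using A1 by simp
    next
      case False
      have MS: "Mn (Suc n) = Mn n" unfolding Mn_def using False less_Suc_eq by auto
      have qS: "q (Suc n) = closest_point L (q n)" using step False by simp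
      have "u \<bullet> q n \<le> u \<bullet> q (Suc n)" unfolding qS by (rule proj_props(1)[OF L uL])
      moreover have "(norm (q (Suc n)))\<^sup>2 \<le> (norm (q n))\<^sup>2"
        unfolding qS by (rule power_mono[OF proj_props(2)[OF L uL]]) simp
      ultimately show ?thesis using IH unfolding MS by linarith
    qed
  qed
  define M where "M = mistakes nrm c v lab L 1 As T"
  have MM: "M = Mn (Suc T)" unfolding M_def Mn_def mistakes_def mis_def q_def by auto
  have fin: "finite M" unfolding MM Mn_def by simp
  have I: "(\<Sum>t\<in>M. 1 - hinge u (\<xi> t) (ell t)) \<le> u \<bullet> q (Suc T)"
    "(norm (q (Suc T)))\<^sup>2 \<le> real (card M) * K" using inv[of "Suc T"] MM by auto
  have K0: "K \<ge> 0" unfolding K_def by simp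
  have "real (card M) - (\<Sum>t\<in>M. hinge u (\<xi> t) (ell t)) = (\<Sum>t\<in>M. 1 - hinge u (\<xi> t) (ell t))"
    by (simp add: sum_subtractf)
  also have "\<dots> \<le> u \<bullet> q (Suc T)" by (rule I(1))
  also have "\<dots> \<le> norm u * norm (q (Suc T))" by (rule Cauchy_Schwarz_ineq2[THEN abs_le_D1])
  also have "\<dots> \<le> norm u * sqrt (real (card M) * K)"
    by (rule mult_left_mono) (use I(2) real_le_rsqrt in auto)
  also have "\<dots> = sqrt ((norm y)\<^sup>2 + b\<^sup>2) * sqrt K * sqrt (real (card M))"
    unfolding u_def by (simp add: norm_Pair real_sqrt_mult)
  finally have F: "real (card M) - (\<Sum>t\<in>M. hinge u (\<xi> t) (ell t)) \<le> sqrt ((norm y)\<^sup>2 + b\<^sup>2) * sqrt K * sqrt (real (card M))" .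
  show ?thesis using F unfolding M_def Let_def u_def \<xi>_def ell_def q_def K_def D_def by simp
  qed
  show ?thesis using main by auto
qed

end
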